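(* Assume the van Kampen setup below with $B_k=X_k$ for $k=0,1,2$ (so $B=X$), and let $P_k:\vec\pi_1(X_k)\to\vec\pi_1(X_k,A_k)$, $k=0,1,2$, be compatible future retracts. Let $a,a'\in A$ and let $[\gamma]:a\to a'$ be a morphism of $\vec\pi_1(X,A)$. Then there exist $n\ge 1$, points $a=y_0,y_1,\dots,y_n=a'$ of $A$, indices $k_1,\dots,k_n\in\{1,2\}$ and morphisms $\alpha_i:y_{i-1}\to y_i$ of $\vec\pi_1(X_{k_i},A_{k_i})$ such that $[\gamma]=\alpha_n\circ\dots\circ\alpha_1$ in $\vec\pi_1(X)$ (where each $\alpha_i$ is regarded in $\vec\pi_1(X)$ via the functor induced by the inclusion $X_{k_i}\subseteq X$).
   Context: A d-space is a topological space with a set of continuous paths $[0,1]\to X$ (dipaths) containing all constant paths, closed under precomposition with continuous non-decreasing maps $[0,1]\to[0,1]$ and under concatenation; subsets carry the dipaths with image in them; a dimap is a continuous map preserving dipaths. $\vec I$ is $[0,1]$ with non-decreasing paths as dipaths. The fundamental category $\vec\pi_1(X)$ has objects the points of $X$ and morphisms $a\to b$ the classes of dipaths from $a$ to $b$ modulo the equivalence relation generated by endpoint-fixing directed homotopies (dimaps $H:\vec I\times\vec I\to X$ with $H(\cdot,0)=\gamma$, $H(\cdot,1)=\gamma'$, $H(0,s)=a$, $H(1,s)=b$); composition is concatenation. For $A\subseteq X$, $\vec\pi_1(X,A)$ is the full subcategory on objects in $A$. Inclusions of d-spaces induce functors between these categories. For $A\subseteq B\subseteq X$ with inclusion $\iota:\vec\pi_1(X,A)\to\vec\pi_1(X,B)$,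 a future retract is a functor $P:\vec\pi_1(X,B)\to\vec\pi_1(X,A)$ left adjoint to $\iota$ whose unit $\eta$ satisfies $\eta_a=\mathrm{id}_a$ for $a\in A$. Van Kampen setup: $X$ is a d-space, $X_1,X_2\subseteq X$ with $X=\mathrm{Int}(X_1)\cup\mathrm{Int}(X_2)$, the dipaths of $X$ are the finite concatenations of dipaths of $X_1$ and of $X_2$, and $X_0=X_1\cap X_2$. For $k=0,1,2$, $A_k\subseteq B_k\subseteq X_k$, with $A_0=A_1\cap A_2$, $B_0=B_1\cap B_2$, $A=A_1\cup A_2$, $B=B_1\cup B_2$, $A=\mathrm{Int}_A(A_1)\cup\mathrm{Int}_A(A_2)$, $B=\mathrm{Int}_B(B_1)\cup\mathrm{Int}_B(B_2)$. Inclusions induce functors $i_k:\vec\pi_1(X_0,B_0)\to\vec\pi_1(X_k,B_k)$ and $i'_k:\vec\pi_1(X_0,A_0)\to\vec\pi_1(X_k,A_k)$ for $k=1,2$. Functors $P_k:\vec\pi_1(X_k,B_k)\to\vec\pi_1(X_k,A_k)$, $k=0,1,2$, are compatible future retracts if each $P_k$ is a future retract with unit $\eta^k$, $P_k\circ i_k=i'_k\circ P_0$ for $k=1,2$, and for every $x\in B_0$ the image of $\eta^0_x$ under the functor $\vec\pi_1(X_0)\to\vec\pi_1(X_k)$ equals $\eta^k_x$ ($k=1,2$). *)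

theory Defs
  imports "HOL-Analysis.Analysis"
begin

text \<open>Paths are functions real => 'a; only their values on [0,1] matter
  (d-spaces are required to be invariant under changing a path outside [0,1]).\<close>

definition dcat :: "(real \<Rightarrow> 'a) \<Rightarrow> (real \<Rightarrow> 'a) \<Rightarrow> real \<Rightarrow> 'a" where
  "dcat g h = (\<lambda>t. if t \<le> 1/2 then g (2 * t) else h (2 * t - 1))"

fun dcatl :: "(real \<Rightarrow> 'a) list \<Rightarrow> real \<Rightarrow> 'a" where
  "dcatl [] = undefined"
| "dcatl [g] = g"
| "dcatl (g # gs) = dcat g (dcatl gs)"

definition reparam :: "(real \<Rightarrow> real) \<Rightarrow> bool" where
  "reparam \<phi> \<longleftrightarrow> continuous_on {0..1} \<phi> \<and> \<phi> ` {0..1} \<subseteq> {0..1} \<and> mono_on {0..1} \<phi>"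

definition dspace :: "'a topology \<Rightarrow> (real \<Rightarrow> 'a) set \<Rightarrow> bool" where
  "dspace T D \<longleftrightarrow>
     (\<forall>g\<in>D. pathin T g)
   \<and> (\<forall>x\<in>topspace T. (\<lambda>_. x) \<in> D)
   \<and> (\<forall>g\<in>D. \<forall>\<phi>. reparam \<phi> \<longrightarrow> g \<circ> \<phi> \<in> D)
   \<and> (\<forall>g\<in>D. \<forall>h\<in>D. g 1 = h 0 \<longrightarrow> dcat g h \<in> D)
   \<and> (\<forall>g h. (\<forall>t\<in>{0..1}. g t = h t) \<longrightarrow> (g \<in> D \<longleftrightarrow> h \<in> D))"

definition subdi :: "(real \<Rightarrow> 'a) set \<Rightarrow> 'a set \<Rightarrow> (real \<Rightarrow> 'a) set" where
  "subdi D S = {g \<in> D. g ` {0..1} \<subseteq> S}"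

text \<open>One endpoint-fixing directed homotopy from g to g' in the d-space (T,D):
  a dimap from the product d-space (directed unit interval squared).\<close>
definition dhrel :: "'a topology \<Rightarrow> (real \<Rightarrow> 'a) set \<Rightarrow> (real \<Rightarrow> 'a) \<Rightarrow> (real \<Rightarrow> 'a) \<Rightarrow> bool" where
  "dhrel T D g g' \<longleftrightarrow> g \<in> D \<and> g' \<in> D \<and>
     (\<exists>H :: real \<times> real \<Rightarrow> 'a.
        continuous_map (top_of_set ({0..1} \<times> {0..1})) T H
      \<and> (\<forall>p q. reparam p \<and> reparam q \<longrightarrow> (\<lambda>t. H (p t, q t)) \<in> D)
      \<and> (\<forall>t\<in>{0..1}. H (t, 0) = g t \<and> H (t, 1) = g' t)
      \<and> (\<forall>s\<in>{0..1}. H (0, s) = g 0 \<and> H (1, s) = g 1))"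

definition dheq :: "'a topology \<Rightarrow> (real \<Rightarrow> 'a) set \<Rightarrow> (real \<Rightarrow> 'a) \<Rightarrow> (real \<Rightarrow> 'a) \<Rightarrow> bool" where
  "dheq T D g h \<longleftrightarrow> g \<in> D \<and> h \<in> D \<and> equivclp (dhrel T D) g h"

definition dcls :: "'a topology \<Rightarrow> (real \<Rightarrow> 'a) set \<Rightarrow> (real \<Rightarrow> 'a) \<Rightarrow> (real \<Rightarrow> 'a) set" where
  "dcls T D g = {h. dheq T D g h}"

definition homs :: "'a topology \<Rightarrow> (real \<Rightarrow> 'a) set \<Rightarrow> 'a \<Rightarrow> 'a \<Rightarrow> (real \<Rightarrow> 'a) set set" where
  "homs T D a b = {dcls T D g | g. g \<in> D \<and> g 0 = a \<and> g 1 = b}"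

definition idm :: "'a topology \<Rightarrow> (real \<Rightarrow> 'a) set \<Rightarrow> 'a \<Rightarrow> (real \<Rightarrow> 'a) set" where
  "idm T D a = dcls T D (\<lambda>_. a)"

text \<open>Composition: cmp T D beta alpha = beta o alpha (alpha first), via concatenation.\<close>
definition cmp :: "'a topology \<Rightarrow> (real \<Rightarrow> 'a) set \<Rightarrow> (real \<Rightarrow> 'a) set \<Rightarrow> (real \<Rightarrow> 'a) set \<Rightarrow> (real \<Rightarrow> 'a) set" where
  "cmp T D \<beta> \<alpha> = dcls T D (dcat (SOME g. g \<in> \<alpha>) (SOME h. h \<in> \<beta>))"

text \<open>Functor induced by an inclusion of d-spaces (T,D) into (T',D') on morphisms.\<close>
definition incl :: "'a topology \<Rightarrow> (real \<Rightarrow> 'a) set \<Rightarrow> (real \<Rightarrow> 'a) set \<Rightarrow> (real \<Rightarrow> 'a) set" where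
  "incl T' D' \<alpha> = dcls T' D' (SOME g. g \<in> \<alpha>)"

text \<open>Future retract P (object part Po, morphism part Pm) from the fundamental category
  of the d-space (T,D) onto its full subcategory on A, with unit eta:
  P is a functor, eta is natural, eta_x is universal from x to the inclusion, and
  eta_a = id_a for a in A.\<close>
definition future_retract ::
  "'a topology \<Rightarrow> (real \<Rightarrow> 'a) set \<Rightarrow> 'a set \<Rightarrow> ('a \<Rightarrow> 'a)
   \<Rightarrow> ((real \<Rightarrow> 'a) set \<Rightarrow> (real \<Rightarrow> 'a) set) \<Rightarrow> ('a \<Rightarrow> (real \<Rightarrow> 'a) set) \<Rightarrow> bool" where
  "future_retract T D A Po Pm \<eta> \<longleftrightarrow>
     (\<forall>x\<in>topspace T. Po x \<in> A)
   \<and> (\<forall>x\<in>topspace T. \<forall>y\<in>topspace T. \<forall>f\<in>homs T D x y. Pm f \<in> homs T D (Po x) (Po y))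
   \<and> (\<forall>x\<in>topspace T. Pm (idm T D x) = idm T D (Po x))
   \<and> (\<forall>x\<in>topspace T. \<forall>y\<in>topspace T. \<forall>z\<in>topspace T. \<forall>f\<in>homs T D x y. \<forall>g\<in>homs T D y z.
        Pm (cmp T D g f) = cmp T D (Pm g) (Pm f))
   \<and> (\<forall>x\<in>topspace T. \<eta> x \<in> homs T D x (Po x))
   \<and> (\<forall>x\<in>topspace T. \<forall>y\<in>topspace T. \<forall>f\<in>homs T D x y.
        cmp T D (Pm f) (\<eta> x) = cmp T D (\<eta> y) f)
   \<and> (\<forall>x\<in>topspace T. \<forall>a\<in>A. \<forall>f\<in>homs T D x a.
        \<exists>!g. g \<in> homs T D (Po x) a \<and> cmp T D g (\<eta> x) = f)
   \<and> (\<forall>a\<in>A. \<eta> a = idm T D a)"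

text \<open>Dipaths of X are the finite concatenations of dipaths of X1 and of X2
  (concatenation along a subdivision 0 = t_0 < ... < t_n = 1).\<close>
definition fin_concats :: "(real \<Rightarrow> 'a) set \<Rightarrow> (real \<Rightarrow> 'a) set" where
  "fin_concats E = {g. \<exists>n::nat. \<exists>t::nat \<Rightarrow> real. n \<ge> 1 \<and> t 0 = 0 \<and> t n = 1
      \<and> (\<forall>i<n. t i < t (Suc i))
      \<and> (\<forall>i<n. (\<lambda>s. g (t i + s * (t (Suc i) - t i))) \<in> E)}"

end

theory Submission
  imports Defs
begin


lemma reparamI:
  assumes "continuous_on {0..1} \<phi>" "\<And>t. t\<in>{0..1} \<Longrightarrow> \<phi> t \<in> {0..1}"
    "\<And>s t. 0 \<le> s \<Longrightarrow> s \<le> t \<Longrightarrow> t \<le> 1 \<Longrightarrow> \<phi> s \<le> \<phi> t"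
  shows "reparam \<phi>"
  using assms unfolding reparam_def by (auto intro!: mono_onI)

lemma reparam_range: "reparam \<phi> \<Longrightarrow> 0 \<le> t \<Longrightarrow> t \<le> 1 \<Longrightarrow> 0 \<le> \<phi> t \<and> \<phi> t \<le> 1"
  unfolding reparam_def image_subset_iff by auto

lemma reparam_mono: "reparam \<phi> \<Longrightarrow> 0 \<le> s \<Longrightarrow> s \<le> t \<Longrightarrow> t \<le> 1 \<Longrightarrow> \<phi> s \<le> \<phi> t"
  unfolding reparam_def by (auto intro: mono_onD)

lemma reparam_cont: "reparam \<phi> \<Longrightarrow> continuous_on {0..1} \<phi>"
  unfolding reparam_def by auto

lemma reparam_lin:
  assumes p: "reparam p" and c: "0 \<le> c" and r: "\<And>t. 0 \<le> t \<Longrightarrow> t \<le> 1 \<Longrightarrow> 0 \<le> c * p t + d \<and> c * p t + d \<le> 1"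
  shows "reparam (\<lambda>t. c * p t + d)"
proof (rule reparamI)
  show "continuous_on {0..1} (\<lambda>t. c * p t + d)"
    using reparam_cont[OF p] by (intro continuous_intros)
  show "\<And>t. t \<in> {0..1} \<Longrightarrow> c * p t + d \<in> {0..1}" using r by auto
  show "\<And>s t. 0 \<le> s \<Longrightarrow> s \<le> t \<Longrightarrow> t \<le> 1 \<Longrightarrow> c * p s + d \<le> c * p t + d"
    using reparam_mono[OF p] c by (simp add: mult_left_mono)
qed

lemma reparam_sub:
  assumes p: "reparam p" and ab: "0 \<le> a" "a \<le> b" "b \<le> 1"
  shows "reparam (\<lambda>u. p (a + (b - a) * u))"
proof (rule reparamI)
  have m: "u \<in> {0..1} \<Longrightarrow> a + (b - a) * u \<in> {0..1}" for u
  proof -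
    assume "u \<in> {0..1}"
    then have "(b - a) * u \<le> (b - a)" "0 \<le> (b-a)*u" using ab by (auto simp: mult_left_le)
    then show ?thesis using ab by auto
  qed
  show "continuous_on {0..1} (\<lambda>u. p (a + (b - a) * u))"
    by (rule continuous_on_compose2[OF reparam_cont[OF p]]) (auto intro!: continuous_intros m)
  show "\<And>t. t \<in> {0..1} \<Longrightarrow> p (a + (b - a) * t) \<in> {0..1}"
    using m reparam_range[OF p] by fastforce
  show "\<And>s t. 0 \<le> s \<Longrightarrow> s \<le> t \<Longrightarrow> t \<le> 1 \<Longrightarrow> p (a + (b - a) * s) \<le> p (a + (b - a) * t)"
  proof -
    fix s t :: real assume st: "0 \<le> s" "s \<le> t" "t \<le> 1"
    then have "(b - a) * s \<le> (b - a) * t" using ab by (simp add: mult_left_mono)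
    then show "p (a + (b - a) * s) \<le> p (a + (b - a) * t)"
      using m[of s] m[of t] st by (intro reparam_mono[OF p]) auto
  qed
qed

lemma reparam_id: "reparam (\<lambda>t. t)"
  by (rule reparamI) auto

context
  fixes T :: "'a topology" and D
  assumes dsp: "dspace T D"
begin

lemma D_ext: "g \<in> D \<Longrightarrow> (\<And>t. t\<in>{0..1} \<Longrightarrow> g t = h t) \<Longrightarrow> h \<in> D"
  using dsp unfolding dspace_def by blast

lemma D_comp: "g \<in> D \<Longrightarrow> reparam \<phi> \<Longrightarrow> (\<lambda>t. g (\<phi> t)) \<in> D"
  using dsp unfolding dspace_def comp_def by blast

lemma D_dcat: "g \<in> D \<Longrightarrow> h \<in> D \<Longrightarrow> g 1 = h 0 \<Longrightarrow> dcat g h \<in> D"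
  using dsp unfolding dspace_def by blast

lemma D_path: "g \<in> D \<Longrightarrow> pathin T g"
  using dsp unfolding dspace_def by blast

lemma D_const: "x \<in> topspace T \<Longrightarrow> (\<lambda>_. x) \<in> D"
  using dsp unfolding dspace_def by blast

lemma D_split:
  assumes t0: "0 \<le> t0" "t0 \<le> 1" and f1: "(\<lambda>u. f (t0 * u)) \<in> D"
    and f2: "(\<lambda>u. f (t0 + (1 - t0) * u)) \<in> D"
  shows "f \<in> D"
proof -
  consider "t0 = 0" | "t0 = 1" | "0 < t0" "t0 < 1" using t0 by linarith
  then show ?thesis
  proof cases
    case 1 then show ?thesis using f2 by simp
  next
    case 2 then show ?thesis using f1 by simp
  next
    case 3
    define \<rho> where "\<rho> t = (if t \<le> t0 then t / (2*t0) else 1/2 + (t - t0) / (2*(1-t0)))" for t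
    have eq: "dcat (\<lambda>u. f (t0 * u)) (\<lambda>u. f (t0 + (1 - t0) * u)) (\<rho> t) = f t" for t
    proof (cases "t \<le> t0")
      case True
      then have "\<rho> t \<le> 1/2" using 3 by (simp add: \<rho>_def field_simps)
      then show ?thesis using True 3 by (simp add: dcat_def \<rho>_def field_simps)
    next
      case False
      then have "\<not> \<rho> t \<le> 1/2" using 3 by (simp add: \<rho>_def field_simps)
      have "2 * \<rho> t - 1 = (t - t0) / (1 - t0)" using False 3 by (simp add: \<rho>_def field_simps)
      moreover have "t0 + (1 - t0) * ((t - t0) / (1 - t0)) = t" using 3 by (simp add: field_simps)
      ultimately show ?thesis using \<open>\<not> \<rho> t \<le> 1/2\<close> by (simp add: dcat_def)
    qed
    have r: "reparam \<rho>"
    proof (rule reparamI)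
      show "continuous_on {0..1} \<rho>"
        unfolding \<rho>_def
        by (rule continuous_on_cases_le[where h="\<lambda>t. t", simplified])
           (use 3 in \<open>auto intro!: continuous_intros simp: field_simps\<close>)
      show "\<rho> t \<in> {0..1}" if "t \<in> {0..1}" for t
        using that 3 by (auto simp: \<rho>_def field_simps)
      show "\<rho> s \<le> \<rho> t" if "0 \<le> s" "s \<le> t" "t \<le> 1" for s t
      proof -
        have a: "\<rho> x \<le> 1/2" if "x \<le> t0" for x using that 3 by (simp add: \<rho>_def field_simps)
        have b: "\<rho> x \<ge> 1/2" if "\<not> x \<le> t0" for x using that 3 by (simp add: \<rho>_def field_simps)
        show ?thesis
        proof (cases "t \<le> t0")
          case True
          then show ?thesis using that 3 by (simp add: \<rho>_def divide_right_mono)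
        next
          case False
          show ?thesis
          proof (cases "s \<le> t0")
            case True then show ?thesis using a b False by fastforce
          next
            case F2: False
            then show ?thesis using that 3 False by (simp add: \<rho>_def divide_right_mono)
          qed
        qed
      qed
    qed
    have "dcat (\<lambda>u. f (t0 * u)) (\<lambda>u. f (t0 + (1 - t0) * u)) \<in> D"
      by (rule D_dcat[OF f1 f2]) simp
    from D_comp[OF this r] show ?thesis using eq by simp
  qed
qed

end


definition dihom :: "'a topology \<Rightarrow> (real \<Rightarrow> 'a) set \<Rightarrow> (real \<times> real \<Rightarrow> 'a) \<Rightarrow> bool" where
  "dihom T D H \<longleftrightarrow> continuous_map (top_of_set ({0..1} \<times> {0..1})) T H
      \<and> (\<forall>p q. reparam p \<and> reparam q \<longrightarrow> (\<lambda>t. H (p t, q t)) \<in> D)"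

lemma dhrel_iff: "dhrel T D g g' \<longleftrightarrow> g \<in> D \<and> g' \<in> D \<and>
     (\<exists>H. dihom T D H
      \<and> (\<forall>t\<in>{0..1}. H (t, 0) = g t \<and> H (t, 1) = g' t)
      \<and> (\<forall>s\<in>{0..1}. H (0, s) = g 0 \<and> H (1, s) = g 1))"
  unfolding dhrel_def dihom_def by blast

lemma cm_fst: "continuous_map (top_of_set ({0..1} \<times> {0..1})) (top_of_set {0..1::real}) (fst :: real\<times>real \<Rightarrow> real)"
  by (auto intro: continuous_intros)

context
  fixes T :: "'a topology" and D
  assumes dsp: "dspace T D"
begin

lemma dihom_const: "g \<in> D \<Longrightarrow> dihom T D (\<lambda>x. g (fst x))"
proof -
  assume g: "g \<in> D"
  have "continuous_map (top_of_set ({0..1} \<times> {0..1::real})) T (g \<circ> fst)"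
    using continuous_map_compose[OF cm_fst, of T g] D_path[OF dsp g] by (simp add: pathin_def)
  moreover have "(\<lambda>t. g (p t)) \<in> D" if "reparam p" for p using D_comp[OF dsp g that] .
  ultimately show ?thesis unfolding dihom_def comp_def by simp
qed

lemma dihom_paste:
  assumes H1: "dihom T D H1" and H2: "dihom T D H2"
    and J: "\<And>s. s \<in> {0..1} \<Longrightarrow> H1 (1, s) = H2 (0, s)"
  shows "dihom T D (\<lambda>x. if fst x \<le> 1/2 then H1 (2 * fst x, snd x) else H2 (2 * fst x - 1, snd x))"
    (is "dihom T D ?H")
proof -
  let ?S = "{0..1::real} \<times> {0..1::real}"
  have c1: "continuous_map (top_of_set ?S) T H1" and c2: "continuous_map (top_of_set ?S) T H2"
    using H1 H2 unfolding dihom_def by auto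
  have cont: "continuous_map (top_of_set ?S) T ?H"
  proof (rule continuous_map_cases_le)
    show "continuous_map (top_of_set ?S) euclideanreal fst" by (auto intro: continuous_intros)
    show "continuous_map (top_of_set ?S) euclideanreal (\<lambda>x. 1/2)" by auto
    have "continuous_map (top_of_set (?S \<inter> {x. fst x \<le> 1/2})) (top_of_set ?S) (\<lambda>x. (2 * fst x, snd x))"
      by (auto intro!: continuous_intros)
    from continuous_map_compose[OF this c1]
    show "continuous_map (subtopology (top_of_set ?S) {x \<in> topspace (top_of_set ?S). fst x \<le> 1/2}) T
        (\<lambda>x. H1 (2 * fst x, snd x))"
      by (simp add: subtopology_subtopology comp_def Int_def)
    have "continuous_map (top_of_set (?S \<inter> {x. 1/2 \<le> fst x})) (top_of_set ?S) (\<lambda>x. (2 * fst x - 1, snd x))"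
      by (auto intro!: continuous_intros)
    from continuous_map_compose[OF this c2]
    show "continuous_map (subtopology (top_of_set ?S) {x \<in> topspace (top_of_set ?S). 1/2 \<le> fst x}) T
        (\<lambda>x. H2 (2 * fst x - 1, snd x))"
      by (simp add: subtopology_subtopology comp_def Int_def)
    show "H1 (2 * fst x, snd x) = H2 (2 * fst x - 1, snd x)" if "x \<in> topspace (top_of_set ?S)" "fst x = 1/2" for x
    proof -
      have "2 * fst x = 1" using that by simp
      then show ?thesis using J[of "snd x"] that by (cases x) auto
    qed
  qed
  have dir: "(\<lambda>t. ?H (p t, q t)) \<in> D" if p: "reparam p" and q: "reparam q" for p q
  proof -
    let ?F = "\<lambda>t. ?H (p t, q t)"
    have D1: "\<And>p q. reparam p \<Longrightarrow> reparam q \<Longrightarrow> (\<lambda>t. H1 (p t, q t)) \<in> D"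
      and D2: "\<And>p q. reparam p \<Longrightarrow> reparam q \<Longrightarrow> (\<lambda>t. H2 (p t, q t)) \<in> D"
      using H1 H2 unfolding dihom_def by auto
    have lo: "?F t = H1 (2 * p t, q t)" if "p t \<le> 1/2" for t using that by simp
    have hi: "?F t = H2 (2 * p t - 1, q t)" if "p t \<ge> 1/2" "t \<in> {0..1}" for t
    proof (cases "p t = 1/2")
      case True
      then have "2 * p t = 1" by simp
      then show ?thesis using J[of "q t"] reparam_range[OF q, of t] that by simp
    qed (use that in simp)
    consider "p 1 \<le> 1/2" | "p 0 \<ge> 1/2" | "p 0 < 1/2" "1/2 < p 1" by linarith
    then show ?thesis
    proof cases
      case 1
      have r: "reparam (\<lambda>t. 2 * p t + 0)"
        using reparam_range[OF p] reparam_mono[OF p, of _ 1] 1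
        by (intro reparam_lin[OF p]) fastforce+
      have "(\<lambda>t. H1 (2 * p t + 0, q t)) \<in> D" by (rule D1[OF r q])
      then show ?thesis
        by (rule D_ext[OF dsp]) (use lo reparam_mono[OF p, of _ 1] 1 in fastforce)
    next
      case 2
      have r: "reparam (\<lambda>t. 2 * p t + -1)"
        using reparam_range[OF p] reparam_mono[OF p, of 0] 2
        by (intro reparam_lin[OF p]) fastforce+
      have "(\<lambda>t. H2 (2 * p t + -1, q t)) \<in> D" by (rule D2[OF r q])
      then show ?thesis
      proof (rule D_ext[OF dsp])
        fix t :: real assume t: "t \<in> {0..1}"
        then have "p t \<ge> 1/2" using reparam_mono[OF p, of 0 t] 2 by auto
        then show "H2 (2 * p t + -1, q t) = ?F t" using hi[of t] t by simp
      qed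
    next
      case 3
      obtain t0 where t0: "0 \<le> t0" "t0 \<le> 1" "p t0 = 1/2"
        using IVT'[of p 0 "1/2" 1] 3 reparam_cont[OF p] by auto
      show ?thesis
      proof (rule D_split[OF dsp t0(1,2)])
        have pa: "reparam (\<lambda>u. p (t0 * u))" using reparam_sub[OF p, of 0 t0] t0 by simp
        have qa: "reparam (\<lambda>u. q (t0 * u))" using reparam_sub[OF q, of 0 t0] t0 by simp
        have m: "t0 * u \<in> {0..1}" if "u \<in> {0..1}" for u
          using that t0 mult_left_le[of u t0] by auto
        have ra: "reparam (\<lambda>u. 2 * p (t0 * u) + 0)"
        proof (rule reparam_lin[OF pa])
          fix u :: real assume "0 \<le> u" "u \<le> 1"
          then show "0 \<le> 2 * p (t0 * u) + 0 \<and> 2 * p (t0 * u) + 0 \<le> 1"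
            using reparam_range[OF pa, of u] reparam_mono[OF p, of "t0 * u" t0] t0 m[of u] mult_left_le[of u t0] by auto
        qed simp
        have "(\<lambda>u. H1 (2 * p (t0 * u) + 0, q (t0 * u))) \<in> D" by (rule D1[OF ra qa])
        then show "(\<lambda>u. ?F (t0 * u)) \<in> D"
        proof (rule D_ext[OF dsp])
          fix u :: real assume "u \<in> {0..1}"
          then have "p (t0 * u) \<le> 1/2" using reparam_mono[OF p, of "t0 * u" t0] t0 m[of u] mult_left_le[of u t0] by auto
          then show "H1 (2 * p (t0 * u) + 0, q (t0 * u)) = ?F (t0 * u)" by simp
        qed
        have pb: "reparam (\<lambda>u. p (t0 + (1 - t0) * u))" using reparam_sub[OF p, of t0 1] t0 by simp
        have qb: "reparam (\<lambda>u. q (t0 + (1 - t0) * u))" using reparam_sub[OF q, of t0 1] t0 by simp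
        have m2: "t0 + (1 - t0) * u \<in> {t0..1}" if "u \<in> {0..1}" for u
          using that t0 mult_left_le[of u "1 - t0"] by auto
        have rb: "reparam (\<lambda>u. 2 * p (t0 + (1 - t0) * u) + -1)"
        proof (rule reparam_lin[OF pb])
          fix u :: real assume "0 \<le> u" "u \<le> 1"
          then show "0 \<le> 2 * p (t0 + (1 - t0) * u) + -1 \<and> 2 * p (t0 + (1 - t0) * u) + -1 \<le> 1"
            using reparam_range[OF pb, of u] reparam_mono[OF p, of t0 "t0 + (1 - t0) * u"] t0 m2[of u] by auto
        qed simp
        have "(\<lambda>u. H2 (2 * p (t0 + (1 - t0) * u) + -1, q (t0 + (1 - t0) * u))) \<in> D" by (rule D2[OF rb qb])
        then show "(\<lambda>u. ?F (t0 + (1 - t0) * u)) \<in> D"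
        proof (rule D_ext[OF dsp])
          fix u :: real assume u: "u \<in> {0..1}"
          then have "p (t0 + (1 - t0) * u) \<ge> 1/2" using reparam_mono[OF p, of t0 "t0 + (1 - t0) * u"] t0 m2[of u] by auto
          then show "H2 (2 * p (t0 + (1 - t0) * u) + -1, q (t0 + (1 - t0) * u)) = ?F (t0 + (1 - t0) * u)"
            using hi[of "t0 + (1 - t0) * u"] m2[OF u] t0 by simp
        qed
      qed
    qed
  qed
  show ?thesis unfolding dihom_def using cont dir by blast
qed

end


lemma dhrel_ends: "dhrel T D g g' \<Longrightarrow> g' 0 = g 0 \<and> g' 1 = g 1"
  unfolding dhrel_def by (metis atLeastAtMost_iff order_refl zero_le_one)

lemma equivclp_ends:
  assumes "equivclp (dhrel T D) g g'" shows "g' 0 = g 0 \<and> g' 1 = g 1"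
  using assms
proof (induction rule: equivclp_induct)
  case (step y z) then show ?case using dhrel_ends by metis
qed simp

lemma dheq_ends: "dheq T D g g' \<Longrightarrow> g' 0 = g 0 \<and> g' 1 = g 1"
  unfolding dheq_def using equivclp_ends by metis

lemma dheq_D: "dheq T D g g' \<Longrightarrow> g \<in> D \<and> g' \<in> D"
  unfolding dheq_def by auto

lemma dheq_refl: "g \<in> D \<Longrightarrow> dheq T D g g"
  unfolding dheq_def by auto

lemma dheq_sym: "dheq T D g g' \<Longrightarrow> dheq T D g' g"
  unfolding dheq_def by (auto intro: equivclp_sym)

lemma dheq_trans: "dheq T D g g' \<Longrightarrow> dheq T D g' g'' \<Longrightarrow> dheq T D g g''"
  unfolding dheq_def by (auto intro: equivclp_trans)

lemma dhrel_dheq: "dhrel T D g g' \<Longrightarrow> dheq T D g g'"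
proof -
  assume a: "dhrel T D g g'"
  then have "g \<in> D \<and> g' \<in> D" unfolding dhrel_def by blast
  then show ?thesis unfolding dheq_def using r_into_equivclp[of "dhrel T D", OF a] by blast
qed

context
  fixes T :: "'a topology" and D
  assumes dsp: "dspace T D"
begin

lemma dheq_ext: "g \<in> D \<Longrightarrow> (\<And>t. t\<in>{0..1} \<Longrightarrow> g t = h t) \<Longrightarrow> dheq T D g h"
proof -
  assume g: "g \<in> D" and e: "\<And>t. t\<in>{0..1} \<Longrightarrow> g t = h t"
  have h: "h \<in> D" by (rule D_ext[OF dsp g e])
  have "dhrel T D g h"
    unfolding dhrel_iff using g h dihom_const[OF dsp g] e by force
  then show ?thesis by (rule dhrel_dheq)
qed

lemma dhrel_dcat_left:
  assumes r: "dhrel T D g g'" and h: "h \<in> D" and j: "g 1 = h 0"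
  shows "dhrel T D (dcat g h) (dcat g' h)"
proof -
  obtain H where g: "g \<in> D" and g': "g' \<in> D" and H: "dihom T D H"
    and b1: "\<forall>t\<in>{0..1}. H (t, 0) = g t \<and> H (t, 1) = g' t"
    and b2: "\<forall>s\<in>{0..1}. H (0, s) = g 0 \<and> H (1, s) = g 1"
    using r unfolding dhrel_iff by blast
  have e: "g' 0 = g 0" "g' 1 = g 1" using dhrel_ends[OF r] by auto
  let ?H = "\<lambda>x. if fst x \<le> 1/2 then H (2 * fst x, snd x) else (\<lambda>x. h (fst x)) (2 * fst x - 1, snd x)"
  have "dihom T D ?H"
    by (rule dihom_paste[OF dsp H dihom_const[OF dsp h]]) (use b2 j in simp)
  moreover have "dcat g h \<in> D" "dcat g' h \<in> D" using D_dcat[OF dsp] g g' h j e by auto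
  moreover have "\<forall>t\<in>{0..1}. ?H (t, 0) = dcat g h t \<and> ?H (t, 1) = dcat g' h t"
    using b1 by (auto simp: dcat_def)
  moreover have "\<forall>s\<in>{0..1}. ?H (0, s) = dcat g h 0 \<and> ?H (1, s) = dcat g h 1"
    using b2 by (auto simp: dcat_def)
  ultimately show ?thesis unfolding dhrel_iff by blast
qed

lemma dhrel_dcat_right:
  assumes r: "dhrel T D h h'" and g: "g \<in> D" and j: "g 1 = h 0"
  shows "dhrel T D (dcat g h) (dcat g h')"
proof -
  obtain H where h: "h \<in> D" and h': "h' \<in> D" and H: "dihom T D H"
    and b1: "\<forall>t\<in>{0..1}. H (t, 0) = h t \<and> H (t, 1) = h' t"
    and b2: "\<forall>s\<in>{0..1}. H (0, s) = h 0 \<and> H (1, s) = h 1"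
    using r unfolding dhrel_iff by blast
  have e: "h' 0 = h 0" "h' 1 = h 1" using dhrel_ends[OF r] by auto
  let ?H = "\<lambda>x. if fst x \<le> 1/2 then (\<lambda>x. g (fst x)) (2 * fst x, snd x) else H (2 * fst x - 1, snd x)"
  have "dihom T D ?H"
    by (rule dihom_paste[OF dsp dihom_const[OF dsp g] H]) (use b2 j in simp)
  moreover have "dcat g h \<in> D" "dcat g h' \<in> D" using D_dcat[OF dsp] g h h' j e by auto
  moreover have "\<forall>t\<in>{0..1}. ?H (t, 0) = dcat g h t \<and> ?H (t, 1) = dcat g h' t"
    using b1 by (auto simp: dcat_def)
  moreover have "\<forall>s\<in>{0..1}. ?H (0, s) = dcat g h 0 \<and> ?H (1, s) = dcat g h 1"
    using b2 j by (auto simp: dcat_def)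
  ultimately show ?thesis unfolding dhrel_iff by blast
qed

lemma dheq_dcat_left:
  assumes r: "dheq T D g g'" and h: "h \<in> D" and j: "g 1 = h 0"
  shows "dheq T D (dcat g h) (dcat g' h)"
proof -
  have eq: "equivclp (dhrel T D) g g'" using r unfolding dheq_def by auto
  have "z 1 = g 1 \<and> equivclp (dhrel T D) (dcat g h) (dcat z h)" if "equivclp (dhrel T D) g z" for z
    using that
  proof (induction rule: equivclp_induct)
    case (step y z)
    then have y1: "y 1 = h 0" using j by simp
    from step.hyps(2) show ?case
    proof
      assume a: "dhrel T D y z"
      then show ?case using step.IH dhrel_ends[OF a] dhrel_dcat_left[OF a h y1]
        by (metis equivclp_into_equivclp)
    next
      assume a: "dhrel T D z y"
      then have z1: "z 1 = h 0" using dhrel_ends y1 by metis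
      then show ?case using step.IH dhrel_dcat_left[OF a h z1] y1 j
        by (metis equivclp_into_equivclp)
    qed
  qed simp
  from this[OF eq] have "equivclp (dhrel T D) (dcat g h) (dcat g' h)" ..
  moreover have "dcat g h \<in> D" "dcat g' h \<in> D" using r h j D_dcat[OF dsp] dheq_D dheq_ends by metis+
  ultimately show ?thesis unfolding dheq_def by auto
qed

lemma dheq_dcat_right:
  assumes r: "dheq T D h h'" and g: "g \<in> D" and j: "g 1 = h 0"
  shows "dheq T D (dcat g h) (dcat g h')"
proof -
  have eq: "equivclp (dhrel T D) h h'" using r unfolding dheq_def by auto
  have "z 0 = h 0 \<and> equivclp (dhrel T D) (dcat g h) (dcat g z)" if "equivclp (dhrel T D) h z" for z
    using that
  proof (induction rule: equivclp_induct)
    case (step y z)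
    then have y1: "g 1 = y 0" using j by simp
    from step.hyps(2) show ?case
    proof
      assume a: "dhrel T D y z"
      then show ?case using step.IH dhrel_ends[OF a] dhrel_dcat_right[OF a g y1]
        by (metis equivclp_into_equivclp)
    next
      assume a: "dhrel T D z y"
      then have z1: "g 1 = z 0" using dhrel_ends y1 by metis
      then show ?case using step.IH dhrel_dcat_right[OF a g z1] y1 j
        by (metis equivclp_into_equivclp)
    qed
  qed simp
  from this[OF eq] have "equivclp (dhrel T D) (dcat g h) (dcat g h')" ..
  moreover have "dcat g h \<in> D" "dcat g h' \<in> D" using r g j D_dcat[OF dsp] dheq_D dheq_ends by metis+
  ultimately show ?thesis unfolding dheq_def by auto
qed

lemma dheq_dcat:
  assumes "dheq T D g g'" "dheq T D h h'" "g 1 = h 0"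
  shows "dheq T D (dcat g h) (dcat g' h')"
proof -
  have "dheq T D (dcat g h) (dcat g' h)" using dheq_dcat_left assms dheq_D by blast
  moreover have "dheq T D (dcat g' h) (dcat g' h')"
    using dheq_dcat_right assms dheq_D dheq_ends by metis
  ultimately show ?thesis by (rule dheq_trans)
qed

end


context
  fixes T :: "'a topology" and D
  assumes dsp: "dspace T D"
begin

lemma dhrel_reparam:
  assumes g: "g \<in> D" and r1: "reparam \<phi>1" and r2: "reparam \<phi>2"
    and e: "\<phi>1 0 = 0" "\<phi>2 0 = 0" "\<phi>1 1 = 1" "\<phi>2 1 = 1"
    and le: "\<And>t. t \<in> {0..1} \<Longrightarrow> \<phi>1 t \<le> \<phi>2 t"
  shows "dhrel T D (\<lambda>t. g (\<phi>1 t)) (\<lambda>t. g (\<phi>2 t))"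
proof -
  define \<psi> where "\<psi> u v = \<phi>1 u + v * (\<phi>2 u - \<phi>1 u)" for u v
  have rng: "\<psi> u v \<in> {0..1}" if "u \<in> {0..1}" "v \<in> {0..1}" for u v
  proof -
    have d: "0 \<le> \<phi>2 u - \<phi>1 u" using le that by auto
    have "v * (\<phi>2 u - \<phi>1 u) \<le> \<phi>2 u - \<phi>1 u" using that d by (simp add: mult_left_le_one_le)
    moreover have "0 \<le> v * (\<phi>2 u - \<phi>1 u)" using that d by simp
    ultimately show ?thesis using reparam_range[OF r1, of u] reparam_range[OF r2, of u] that
      unfolding \<psi>_def by auto
  qed
  have mon: "\<psi> u v \<le> \<psi> u' v'" if "0 \<le> u" "u \<le> u'" "u' \<le> 1" "0 \<le> v" "v \<le> v'" "v' \<le> 1" for u u' v v'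
  proof -
    have a: "\<phi>1 u \<le> \<phi>1 u'" "\<phi>2 u \<le> \<phi>2 u'" using reparam_mono r1 r2 that by auto
    have d: "0 \<le> \<phi>2 u' - \<phi>1 u'" using le that by auto
    have "0 \<le> (1 - v) * (\<phi>1 u' - \<phi>1 u) + v * (\<phi>2 u' - \<phi>2 u)" using a that by simp
    then have "\<psi> u v \<le> \<psi> u' v" unfolding \<psi>_def by (simp add: algebra_simps)
    also have "\<dots> \<le> \<psi> u' v'" unfolding \<psi>_def using d that by (simp add: mult_right_mono)
    finally show ?thesis .
  qed
  have c1: "continuous_on {0..1} \<phi>1" "continuous_on {0..1} \<phi>2" using r1 r2 reparam_cont by auto
  let ?S = "{0..1::real} \<times> {0..1::real}"
  have cS: "continuous_on ?S (\<lambda>x. \<psi> (fst x) (snd x))"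
  proof -
    have "continuous_on ?S (\<lambda>x. \<phi>1 (fst x))" "continuous_on ?S (\<lambda>x. \<phi>2 (fst x))"
      by (auto intro!: continuous_on_compose2[OF c1(1)] continuous_on_compose2[OF c1(2)] continuous_intros)
    then show ?thesis unfolding \<psi>_def by (intro continuous_intros)
  qed
  have cm: "continuous_map (top_of_set ?S) (top_of_set {0..1}) (\<lambda>x. \<psi> (fst x) (snd x))"
    using cS rng by auto
  have H1: "continuous_map (top_of_set ?S) T (g \<circ> (\<lambda>x. \<psi> (fst x) (snd x)))"
    using continuous_map_compose[OF cm, of T g] D_path[OF dsp g] by (simp add: pathin_def)
  have H2: "(\<lambda>t. g (\<psi> (p t) (q t))) \<in> D" if p: "reparam p" and q: "reparam q" for p q
  proof -
    have "reparam (\<lambda>t. \<psi> (p t) (q t))"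
    proof (rule reparamI)
      have "continuous_on {0..1} (\<lambda>t. \<phi>1 (p t))" "continuous_on {0..1} (\<lambda>t. \<phi>2 (p t))"
        using reparam_range[OF p]
        by (auto intro!: continuous_on_compose2[OF c1(1) reparam_cont[OF p]]
            continuous_on_compose2[OF c1(2) reparam_cont[OF p]])
      then show "continuous_on {0..1} (\<lambda>t. \<psi> (p t) (q t))"
        unfolding \<psi>_def using reparam_cont[OF q] by (intro continuous_intros)
      show "\<psi> (p t) (q t) \<in> {0..1}" if "t \<in> {0..1}" for t
        using rng reparam_range[OF p] reparam_range[OF q] that by auto
      show "\<psi> (p s) (q s) \<le> \<psi> (p t) (q t)" if "0 \<le> s" "s \<le> t" "t \<le> 1" for s t
        using mon reparam_range[OF p] reparam_range[OF q] reparam_mono[OF p] reparam_mono[OF q] that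
        by (meson order_trans)
    qed
    from D_comp[OF dsp g this] show ?thesis .
  qed
  let ?H = "\<lambda>x. g (\<psi> (fst x) (snd x))"
  have "dihom T D ?H" unfolding dihom_def using H1 H2 by (simp add: comp_def)
  moreover have "(\<lambda>t. g (\<phi>1 t)) \<in> D" "(\<lambda>t. g (\<phi>2 t)) \<in> D" using D_comp[OF dsp g] r1 r2 by auto
  moreover have "\<forall>t\<in>{0..1}. ?H (t, 0) = g (\<phi>1 t) \<and> ?H (t, 1) = g (\<phi>2 t)" by (simp add: \<psi>_def)
  moreover have "\<forall>s\<in>{0..1}. ?H (0, s) = g (\<phi>1 0) \<and> ?H (1, s) = g (\<phi>1 1)" by (simp add: \<psi>_def e)
  ultimately show ?thesis unfolding dhrel_iff by blast
qed

lemma dheq_reparam: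
  assumes g: "g \<in> D" and r: "reparam \<phi>" and e: "\<phi> 0 = 0" "\<phi> 1 = 1"
  shows "dheq T D (\<lambda>t. g (\<phi> t)) g"
proof -
  define \<mu> where "\<mu> t = max (\<phi> t) t" for t
  have rm: "reparam \<mu>"
  proof (rule reparamI)
    show "continuous_on {0..1} \<mu>" unfolding \<mu>_def using reparam_cont[OF r] by (intro continuous_intros)
    show "\<mu> t \<in> {0..1}" if "t \<in> {0..1}" for t using reparam_range[OF r, of t] that by (auto simp: \<mu>_def)
    show "\<mu> s \<le> \<mu> t" if "0 \<le> s" "s \<le> t" "t \<le> 1" for s t
      using reparam_mono[OF r, of s t] that by (auto simp: \<mu>_def)
  qed
  have em: "\<mu> 0 = 0" "\<mu> 1 = 1" using e by (auto simp: \<mu>_def)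
  have a: "dhrel T D (\<lambda>t. g (\<phi> t)) (\<lambda>t. g (\<mu> t))"
    by (rule dhrel_reparam[OF g r rm e(1) em(1) e(2) em(2)]) (auto simp: \<mu>_def)
  have b: "dhrel T D (\<lambda>t. g ((\<lambda>t. t) t)) (\<lambda>t. g (\<mu> t))"
    by (rule dhrel_reparam[OF g reparam_id rm _ em(1) _ em(2)]) (auto simp: \<mu>_def)
  show ?thesis using dheq_trans[OF dhrel_dheq[OF a] dheq_sym[OF dhrel_dheq[OF b]]] by simp
qed

lemma dheq_assoc:
  assumes f: "f \<in> D" and g: "g \<in> D" and h: "h \<in> D" and j: "f 1 = g 0" "g 1 = h 0"
  shows "dheq T D (dcat (dcat f g) h) (dcat f (dcat g h))"
proof -
  let ?k = "dcat f (dcat g h)"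
  define \<rho> where "\<rho> t = min (2 * t) (min (t + 1/4) ((t + 1) / 2))" for t :: real
  have eq: "dcat (dcat f g) h = (\<lambda>t. ?k (\<rho> t))"
  proof
    fix t :: real
    consider "t \<le> 1/4" | "1/4 < t" "t \<le> 1/2" | "1/2 < t" by linarith
    then show "dcat (dcat f g) h t = ?k (\<rho> t)"
    proof cases
      case 1
      then have "\<rho> t = 2 * t" by (simp add: \<rho>_def)
      then show ?thesis using 1 by (simp add: dcat_def)
    next
      case 2
      then have "\<rho> t = t + 1/4" by (simp add: \<rho>_def)
      then show ?thesis using 2 by (simp add: dcat_def algebra_simps)
    next
      case 3
      then have "\<rho> t = (t + 1) / 2" by (simp add: \<rho>_def)
      then show ?thesis using 3 by (simp add: dcat_def algebra_simps)
    qed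
  qed
  have r: "reparam \<rho>"
  proof (rule reparamI)
    show "continuous_on {0..1} \<rho>" unfolding \<rho>_def by (intro continuous_intros) auto
    show "\<rho> t \<in> {0..1}" if "t \<in> {0..1}" for t using that by (auto simp: \<rho>_def min_def)
    show "\<rho> s \<le> \<rho> t" if "0 \<le> s" "s \<le> t" "t \<le> 1" for s t
      using that by (auto simp: \<rho>_def min_def)
  qed
  have gh: "dcat g h \<in> D" using D_dcat[OF dsp g h j(2)] .
  have k: "?k \<in> D" using D_dcat[OF dsp f gh] j by (simp add: dcat_def)
  show ?thesis unfolding eq by (rule dheq_reparam[OF k r]) (auto simp: \<rho>_def)
qed

lemma dheq_lunit:
  assumes g: "g \<in> D"
  shows "dheq T D (dcat (\<lambda>_. g 0) g) g"
proof -
  define \<rho> where "\<rho> t = max 0 (2 * t - 1)" for t :: real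
  have eq: "dcat (\<lambda>_. g 0) g = (\<lambda>t. g (\<rho> t))"
  proof (rule ext)
    fix t :: real
    show "dcat (\<lambda>_. g 0) g t = g (\<rho> t)"
    proof (cases "2 * t = 1")
      case True
      then have t: "t = 1/2" by simp
      show ?thesis unfolding t by (simp add: dcat_def \<rho>_def)
    qed (auto simp: dcat_def \<rho>_def max_def)
  qed
  have r: "reparam \<rho>"
  proof (rule reparamI)
    show "continuous_on {0..1} \<rho>" unfolding \<rho>_def by (intro continuous_intros)
  qed (auto simp: \<rho>_def)
  show ?thesis unfolding eq by (rule dheq_reparam[OF g r]) (auto simp: \<rho>_def)
qed

lemma dheq_runit:
  assumes g: "g \<in> D"
  shows "dheq T D (dcat g (\<lambda>_. g 1)) g"
proof -
  define \<rho> where "\<rho> t = min 1 (2 * t)" for t :: real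
  have eq: "dcat g (\<lambda>_. g 1) = (\<lambda>t. g (\<rho> t))"
  proof (rule ext)
    fix t :: real
    show "dcat g (\<lambda>_. g 1) t = g (\<rho> t)"
    proof (cases "2 * t = 1")
      case True
      then have t: "t = 1/2" by simp
      show ?thesis unfolding t by (simp add: dcat_def \<rho>_def)
    qed (auto simp: dcat_def \<rho>_def min_def)
  qed
  have r: "reparam \<rho>"
  proof (rule reparamI)
    show "continuous_on {0..1} \<rho>" unfolding \<rho>_def by (intro continuous_intros)
  qed (auto simp: \<rho>_def)
  show ?thesis unfolding eq by (rule dheq_reparam[OF g r]) (auto simp: \<rho>_def)
qed

end


lemma subdi_D: "g \<in> subdi D X \<Longrightarrow> g \<in> D" unfolding subdi_def by auto

lemma subdi_dcat:
  assumes dsp: "dspace T D" and g: "g \<in> subdi D X" and h: "h \<in> subdi D X" and j: "g 1 = h 0"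
  shows "dcat g h \<in> subdi D X"
proof -
  have "dcat g h \<in> D" using D_dcat[OF dsp] g h j by (auto simp: subdi_def)
  moreover have "dcat g h t \<in> X" if "t \<in> {0..1}" for t
  proof (cases "t \<le> 1/2")
    case True
    then have "2 * t \<in> {0..1}" using that by auto
    then show ?thesis using g True unfolding subdi_def dcat_def by auto
  next
    case False
    then have "2 * t - 1 \<in> {0..1}" using that by auto
    then show ?thesis using h False unfolding subdi_def dcat_def by auto
  qed
  ultimately show ?thesis unfolding subdi_def by auto
qed

lemma dhrel_lift: "dhrel (subtopology T X) (subdi D X) g h \<Longrightarrow> dhrel T D g h"
proof -
  assume a: "dhrel (subtopology T X) (subdi D X) g h"
  then obtain H where H: "continuous_map (top_of_set ({0..1} \<times> {0..1})) (subtopology T X) H"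
      "\<forall>p q. reparam p \<and> reparam q \<longrightarrow> (\<lambda>t. H (p t, q t)) \<in> subdi D X"
      "\<forall>t\<in>{0..1}. H (t, 0) = g t \<and> H (t, 1) = h t"
      "\<forall>s\<in>{0..1}. H (0, s) = g 0 \<and> H (1, s) = g 1"
    unfolding dhrel_def by blast
  have gh: "g \<in> D" "h \<in> D" using a unfolding dhrel_def subdi_def by auto
  have "continuous_map (top_of_set ({0..1} \<times> {0..1})) T H"
    using H(1) by (rule continuous_map_into_fulltopology)
  moreover have "\<forall>p q. reparam p \<and> reparam q \<longrightarrow> (\<lambda>t. H (p t, q t)) \<in> D"
    using H(2) subdi_D by blast
  ultimately show ?thesis unfolding dhrel_def using gh H(3,4) by blast
qed

lemma dheq_lift:
  assumes "dheq (subtopology T X) (subdi D X) g h" shows "dheq T D g h"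
proof -
  have g: "g \<in> D" and h: "h \<in> D" using assms unfolding dheq_def subdi_def by auto
  have "equivclp (dhrel (subtopology T X) (subdi D X)) g h" using assms unfolding dheq_def by auto
  then have "equivclp (dhrel T D) g h"
  proof (induction rule: equivclp_induct)
    case (step y z)
    from step.hyps(2) have "dhrel T D y z \<or> dhrel T D z y" using dhrel_lift by blast
    then show ?case using step.IH by (rule equivclp_into_equivclp[rotated])
  qed simp
  then show ?thesis using g h unfolding dheq_def by auto
qed

lemma dcls_mem: "g \<in> D \<Longrightarrow> g \<in> dcls T D g"
  unfolding dcls_def by (simp add: dheq_refl)

lemma dcls_iff: "h \<in> dcls T D g \<longleftrightarrow> dheq T D g h"
  unfolding dcls_def by simp

lemma dcls_some: "g \<in> D \<Longrightarrow> dheq T D g (SOME h. h \<in> dcls T D g)"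
proof -
  assume g: "g \<in> D"
  have "g \<in> dcls T D g" using g by (rule dcls_mem)
  then have "(SOME h. h \<in> dcls T D g) \<in> dcls T D g" by (rule someI[where P="\<lambda>h. h \<in> dcls T D g"])
  then show ?thesis unfolding dcls_iff .
qed

lemma homs_rep: "f \<in> homs T D x y \<Longrightarrow> \<exists>g. f = dcls T D g \<and> g \<in> D \<and> g 0 = x \<and> g 1 = y"
  unfolding homs_def by auto

lemma homs_some:
  assumes "f \<in> homs T D x y"
  shows "dheq T D (SOME h. h \<in> f) (SOME h. h \<in> f) \<and> (SOME h. h \<in> f) \<in> f \<and> (SOME h. h \<in> f) \<in> D
     \<and> (SOME h. h \<in> f) 0 = x \<and> (SOME h. h \<in> f) 1 = y"
proof -
  obtain g where g: "f = dcls T D g" "g \<in> D" "g 0 = x" "g 1 = y" using homs_rep[OF assms] by blast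
  have a: "dheq T D g (SOME h. h \<in> f)" using dcls_some[OF g(2)] g(1) by simp
  have b: "(SOME h. h \<in> f) \<in> f" using a g(1) dcls_iff by blast
  have c: "(SOME h. h \<in> f) \<in> D" using dheq_D[OF a] by blast
  show ?thesis using dheq_ends[OF a] g b c dheq_refl[OF c] by simp
qed

lemma homs_mem:
  assumes "f \<in> homs T D x y" "e \<in> f"
  shows "e \<in> D \<and> e 0 = x \<and> e 1 = y \<and> dheq T D e (SOME h. h \<in> f)"
proof -
  obtain g where g: "f = dcls T D g" "g \<in> D" "g 0 = x" "g 1 = y" using homs_rep[OF assms(1)] by blast
  have "dheq T D g e" using assms(2) unfolding g(1) dcls_iff .
  moreover have "dheq T D g (SOME h. h \<in> f)" using dcls_some[OF g(2)] g(1) by simp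
  ultimately have "dheq T D e (SOME h. h \<in> f)" "dheq T D g e" using dheq_trans[OF dheq_sym] by blast+
  then show ?thesis using g dheq_ends[of T D g e] dheq_D[of T D g e] by simp
qed

lemma base:
  fixes T :: "'a topology"
  assumes dsp: "dspace T D" and Xs: "X \<subseteq> topspace T"
    and FR: "future_retract (subtopology T X) (subdi D X) A Po Pm \<eta>"
    and Eprop: "\<And>x e. x \<in> X \<Longrightarrow> e \<in> \<eta> x \<Longrightarrow> dheq T D e (E x)"
    and c: "c \<in> subdi D X"
  shows "\<exists>\<delta>. \<delta> \<in> subdi D X \<and> \<delta> 0 = Po (c 0) \<and> \<delta> 1 = Po (c 1) \<and> Po (c 0) \<in> A \<and> Po (c 1) \<in> A
     \<and> dheq T D (dcat (E (c 0)) \<delta>) (dcat c (E (c 1)))"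
proof -
  let ?T = "subtopology T X" and ?D = "subdi D X"
  have ts: "topspace ?T = X" using Xs by auto
  have cX: "c 0 \<in> X" "c 1 \<in> X" using c unfolding subdi_def by auto
  note FR' = FR[unfolded future_retract_def ts]
  have fr1: "\<forall>x\<in>X. Po x \<in> A" using FR' by (rule conjunct1)
  have fr2: "\<forall>x\<in>X. \<forall>y\<in>X. \<forall>f\<in>homs ?T ?D x y. Pm f \<in> homs ?T ?D (Po x) (Po y)"
    using FR' by (elim conjE)
  have fr3: "\<forall>x\<in>X. \<eta> x \<in> homs ?T ?D x (Po x)"
    using FR' by (elim conjE)
  have fr4: "\<forall>x\<in>X. \<forall>y\<in>X. \<forall>f\<in>homs ?T ?D x y. cmp ?T ?D (Pm f) (\<eta> x) = cmp ?T ?D (\<eta> y) f"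
    using FR' by (elim conjE)
  have fr: "\<And>x. x \<in> X \<Longrightarrow> Po x \<in> A"
    "\<And>x y f. x \<in> X \<Longrightarrow> y \<in> X \<Longrightarrow> f \<in> homs ?T ?D x y \<Longrightarrow> Pm f \<in> homs ?T ?D (Po x) (Po y)"
    "\<And>x. x \<in> X \<Longrightarrow> \<eta> x \<in> homs ?T ?D x (Po x)"
    "\<And>x y f. x \<in> X \<Longrightarrow> y \<in> X \<Longrightarrow> f \<in> homs ?T ?D x y \<Longrightarrow> cmp ?T ?D (Pm f) (\<eta> x) = cmp ?T ?D (\<eta> y) f"
    using fr1 fr2 fr3 fr4 by auto
  define f where "f = dcls ?T ?D c"
  have fh: "f \<in> homs ?T ?D (c 0) (c 1)" unfolding f_def homs_def using c by blast
  have Pf: "Pm f \<in> homs ?T ?D (Po (c 0)) (Po (c 1))" by (rule fr(2)[OF cX fh])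
  have ex: "\<eta> (c 0) \<in> homs ?T ?D (c 0) (Po (c 0))" and ez: "\<eta> (c 1) \<in> homs ?T ?D (c 1) (Po (c 1))"
    using fr(3) cX by auto
  obtain \<delta> where \<delta>: "Pm f = dcls ?T ?D \<delta>" "\<delta> \<in> ?D" "\<delta> 0 = Po (c 0)" "\<delta> 1 = Po (c 1)"
    using homs_rep[OF Pf] by blast
  let ?ex = "SOME h. h \<in> \<eta> (c 0)" and ?d = "SOME h. h \<in> Pm f"
    and ?c = "SOME h. h \<in> f" and ?ez = "SOME h. h \<in> \<eta> (c 1)"
  have sex: "?ex \<in> \<eta> (c 0)" "?ex \<in> ?D" "?ex 0 = c 0" "?ex 1 = Po (c 0)" using homs_some[OF ex] by auto
  have sez: "?ez \<in> \<eta> (c 1)" "?ez \<in> ?D" "?ez 0 = c 1" "?ez 1 = Po (c 1)" using homs_some[OF ez] by auto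
  have sd: "?d \<in> ?D" "?d 0 = Po (c 0)" "?d 1 = Po (c 1)" using homs_some[OF Pf] by auto
  have sc: "?c \<in> ?D" "?c 0 = c 0" "?c 1 = c 1" using homs_some[OF fh] by auto
  have "cmp ?T ?D (Pm f) (\<eta> (c 0)) = cmp ?T ?D (\<eta> (c 1)) f" by (rule fr(4)[OF cX fh])
  then have eqc: "dcls ?T ?D (dcat ?ex ?d) = dcls ?T ?D (dcat ?c ?ez)" unfolding cmp_def .
  have "dcat ?ex ?d \<in> ?D" by (rule subdi_dcat[OF dsp sex(2) sd(1)]) (simp add: sex sd)
  then have "dcat ?ex ?d \<in> dcls ?T ?D (dcat ?c ?ez)" using eqc dcls_mem[OF \<open>dcat ?ex ?d \<in> ?D\<close>, of ?T] by simp
  then have "dheq ?T ?D (dcat ?c ?ez) (dcat ?ex ?d)" unfolding dcls_iff .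
  then have m: "dheq T D (dcat ?c ?ez) (dcat ?ex ?d)" by (rule dheq_lift)
  have e1: "dheq T D (E (c 0)) ?ex" using Eprop[OF cX(1) sex(1)] by (rule dheq_sym)
  have e2: "dheq T D ?ez (E (c 1))" using Eprop[OF cX(2) sez(1)] .
  have d1: "dheq T D \<delta> ?d"
  proof -
    have "dheq ?T ?D \<delta> ?d" using dcls_some[OF \<delta>(2)] \<delta>(1) by simp
    then show ?thesis by (rule dheq_lift)
  qed
  have c1: "dheq T D ?c c"
  proof -
    have "dheq ?T ?D c ?c" using dcls_some[OF c] f_def by simp
    then show ?thesis by (rule dheq_lift[OF dheq_sym])
  qed
  have s1: "dheq T D (dcat (E (c 0)) \<delta>) (dcat ?ex ?d)"
    by (rule dheq_dcat[OF dsp e1 d1]) (use dheq_ends[OF e1] sex \<delta> in simp)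
  have s3: "dheq T D (dcat ?c ?ez) (dcat c (E (c 1)))"
    by (rule dheq_dcat[OF dsp c1 e2]) (use sc sez in simp)
  have "dheq T D (dcat (E (c 0)) \<delta>) (dcat c (E (c 1)))"
    by (rule dheq_trans[OF dheq_trans[OF s1 dheq_sym[OF m]] s3])
  moreover note \<delta>(2-4)
  moreover have "Po (c 0) \<in> A" "Po (c 1) \<in> A" using fr(1) cX by auto
  ultimately show ?thesis by blast
qed



lemma strict_lt:
  assumes "\<forall>i<n. t i < t (Suc i)" "i < j" "j \<le> n"
  shows "(t i :: real) < t j"
  using assms(2,3)
proof (induction j)
  case (Suc j)
  then show ?case using assms(1)
    by (metis Suc_leD Suc_le_lessD less_Suc_eq order.strict_trans)
qed simp

lemma dheq_split:
  assumes dsp: "dspace T D" and g: "g \<in> D" and t1: "0 < t1" "t1 < 1"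
  shows "dheq T D (dcat (\<lambda>s. g (s * t1)) (\<lambda>s. g (t1 + (1 - t1) * s))) g"
proof -
  define \<rho> where "\<rho> u = (if u \<le> 1/2 then 2 * u * t1 else t1 + (1 - t1) * (2 * u - 1))" for u :: real
  have eq: "dcat (\<lambda>s. g (s * t1)) (\<lambda>s. g (t1 + (1 - t1) * s)) = (\<lambda>u. g (\<rho> u))"
    by (rule ext) (simp add: dcat_def \<rho>_def)
  have r: "reparam \<rho>"
  proof (rule reparamI)
    show "continuous_on {0..1} \<rho>"
      unfolding \<rho>_def
    proof (rule continuous_on_cases_le[where h="\<lambda>t. t"])
      show "2 * u * t1 = t1 + (1 - t1) * (2 * u - 1)" if "u \<in> {0..1}" "u = 1/2" for u
        unfolding that(2) by simp
    qed (auto intro!: continuous_intros)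
    show "\<rho> u \<in> {0..1}" if "u \<in> {0..1}" for u
    proof (cases "u \<le> 1/2")
      case True
      then have "2 * u * t1 \<le> 1 * 1" using that t1 by (intro mult_mono) auto
      then show ?thesis using True that t1 by (auto simp: \<rho>_def)
    next
      case False
      define v where "v = (1 - t1) * (2 * u - 1)"
      have v1: "v \<le> 1 - t1" unfolding v_def using that t1 False mult_left_mono[of "2*u-1" 1 "1-t1"] by auto
      have v2: "0 \<le> v" unfolding v_def using False t1 by simp
      have "\<rho> u = t1 + v" using False by (simp add: \<rho>_def v_def)
      then show ?thesis using v1 v2 t1 by simp
    qed
    show "\<rho> s \<le> \<rho> u" if "0 \<le> s" "s \<le> u" "u \<le> 1" for s u
    proof -
      have a: "\<rho> x \<le> t1" if "x \<le> 1/2" "0 \<le> x" for x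
      proof -
        have "2 * x * t1 \<le> 1 * t1" using that t1 by (intro mult_right_mono) auto
        then show ?thesis using that by (simp add: \<rho>_def)
      qed
      have b: "\<rho> x \<ge> t1" if "\<not> x \<le> 1/2" for x using that t1 by (simp add: \<rho>_def)
      show ?thesis
      proof (cases "u \<le> 1/2")
        case True
        then show ?thesis using that t1 by (simp add: \<rho>_def mult_right_mono)
      next
        case False
        show ?thesis
        proof (cases "s \<le> 1/2")
          case True then show ?thesis using a[OF True \<open>0 \<le> s\<close>] b[OF False] by linarith
        next
          case F2: False
          then show ?thesis using that t1 False by (simp add: \<rho>_def mult_left_mono)
        qed
      qed
    qed
  qed
  show ?thesis unfolding eq by (rule dheq_reparam[OF dsp g r]) (auto simp: \<rho>_def)
qed

locale vk =
  fixes T :: "'a topology" and D :: "(real \<Rightarrow> 'a) set"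
    and X1 X2 A1 A2 :: "'a set"
    and P0o P1o P2o :: "'a \<Rightarrow> 'a"
    and P0m P1m P2m :: "(real \<Rightarrow> 'a) set \<Rightarrow> (real \<Rightarrow> 'a) set"
    and \<eta>0 \<eta>1 \<eta>2 :: "'a \<Rightarrow> (real \<Rightarrow> 'a) set"
  assumes dsp: "dspace T D"
    and X1sub: "X1 \<subseteq> topspace T" and X2sub: "X2 \<subseteq> topspace T"
    and A1sub: "A1 \<subseteq> X1" and A2sub: "A2 \<subseteq> X2"
    and P0: "future_retract (subtopology T (X1 \<inter> X2)) (subdi D (X1 \<inter> X2)) (A1 \<inter> A2) P0o P0m \<eta>0"
    and P1: "future_retract (subtopology T X1) (subdi D X1) A1 P1o P1m \<eta>1"
    and P2: "future_retract (subtopology T X2) (subdi D X2) A2 P2o P2m \<eta>2"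
    and obj1: "\<forall>x\<in>X1 \<inter> X2. P1o x = P0o x"
    and obj2: "\<forall>x\<in>X1 \<inter> X2. P2o x = P0o x"
    and unit1: "\<forall>x\<in>X1 \<inter> X2. incl (subtopology T X1) (subdi D X1) (\<eta>0 x) = \<eta>1 x"
    and unit2: "\<forall>x\<in>X1 \<inter> X2. incl (subtopology T X2) (subdi D X2) (\<eta>0 x) = \<eta>2 x"
begin

definition Pk :: "'a \<Rightarrow> 'a" where "Pk x = (if x \<in> X1 then P1o x else P2o x)"

definition E :: "'a \<Rightarrow> real \<Rightarrow> 'a" where
  "E x = (if x \<in> X1 \<inter> X2 then SOME e. e \<in> \<eta>0 x else if x \<in> X1 then SOME e. e \<in> \<eta>1 x else SOME e. e \<in> \<eta>2 x)"

lemma Pk1: "x \<in> X1 \<Longrightarrow> Pk x = P1o x" by (simp add: Pk_def)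
lemma Pk2: "x \<in> X2 \<Longrightarrow> Pk x = P2o x" using obj1 obj2 by (auto simp: Pk_def)

lemma eta_homs:
  assumes FR: "future_retract (subtopology T X) (subdi D X) A Po Pm \<eta>" and Xs: "X \<subseteq> topspace T"
    and x: "x \<in> X"
  shows "\<eta> x \<in> homs (subtopology T X) (subdi D X) x (Po x)"
proof -
  have ts: "topspace (subtopology T X) = X" using Xs by auto
  note FR' = FR[unfolded future_retract_def ts]
  have "\<forall>x\<in>X. \<eta> x \<in> homs (subtopology T X) (subdi D X) x (Po x)" using FR' by (elim conjE)
  then show ?thesis using x by blast
qed

lemma E1: assumes x: "x \<in> X1" and e: "e \<in> \<eta>1 x" shows "dheq T D e (E x)"
proof (cases "x \<in> X2")
  case True
  have h0: "\<eta>0 x \<in> homs (subtopology T (X1 \<inter> X2)) (subdi D (X1 \<inter> X2)) x (P0o x)"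
    by (rule eta_homs[OF P0]) (use X1sub True x in auto)
  have Ex: "E x = (SOME e. e \<in> \<eta>0 x)" using True x by (simp add: E_def)
  have Ed: "E x \<in> subdi D X1" using homs_some[OF h0] Ex unfolding subdi_def by auto
  have "\<eta>1 x = dcls (subtopology T X1) (subdi D X1) (E x)"
    using unit1 True x Ex by (auto simp: incl_def)
  then have "dheq (subtopology T X1) (subdi D X1) (E x) e" using e dcls_iff by metis
  then show ?thesis by (rule dheq_lift[OF dheq_sym])
next
  case False
  have h1: "\<eta>1 x \<in> homs (subtopology T X1) (subdi D X1) x (P1o x)"
    by (rule eta_homs[OF P1 X1sub x])
  have Ex: "E x = (SOME e. e \<in> \<eta>1 x)" using False x by (simp add: E_def)
  show ?thesis using homs_mem[OF h1 e] Ex dheq_lift by metis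
qed

lemma E2: assumes x: "x \<in> X2" and e: "e \<in> \<eta>2 x" shows "dheq T D e (E x)"
proof (cases "x \<in> X1")
  case True
  have h0: "\<eta>0 x \<in> homs (subtopology T (X1 \<inter> X2)) (subdi D (X1 \<inter> X2)) x (P0o x)"
    by (rule eta_homs[OF P0]) (use X1sub True x in auto)
  have Ex: "E x = (SOME e. e \<in> \<eta>0 x)" using True x by (simp add: E_def)
  have "\<eta>2 x = dcls (subtopology T X2) (subdi D X2) (E x)"
    using unit2 True x Ex by (auto simp: incl_def)
  then have "dheq (subtopology T X2) (subdi D X2) (E x) e" using e dcls_iff by metis
  then show ?thesis by (rule dheq_lift[OF dheq_sym])
next
  case False
  have h2: "\<eta>2 x \<in> homs (subtopology T X2) (subdi D X2) x (P2o x)"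
    by (rule eta_homs[OF P2 X2sub x])
  have Ex: "E x = (SOME e. e \<in> \<eta>2 x)" using False x by (simp add: E_def)
  show ?thesis using homs_mem[OF h2 e] Ex dheq_lift by metis
qed

lemma Efacts: assumes x: "x \<in> X1 \<union> X2" shows "E x \<in> D \<and> E x 0 = x \<and> E x 1 = Pk x"
proof (cases "x \<in> X1")
  case True
  have h1: "\<eta>1 x \<in> homs (subtopology T X1) (subdi D X1) x (P1o x)" by (rule eta_homs[OF P1 X1sub True])
  have s: "(SOME h. h \<in> \<eta>1 x) \<in> \<eta>1 x" using homs_some[OF h1] by blast
  have "dheq T D (SOME h. h \<in> \<eta>1 x) (E x)" by (rule E1[OF True s])
  then show ?thesis using homs_some[OF h1] dheq_ends dheq_D Pk1[OF True] by metis
next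
  case False
  then have x2: "x \<in> X2" using x by auto
  have h2: "\<eta>2 x \<in> homs (subtopology T X2) (subdi D X2) x (P2o x)" by (rule eta_homs[OF P2 X2sub x2])
  have s: "(SOME h. h \<in> \<eta>2 x) \<in> \<eta>2 x" using homs_some[OF h2] by blast
  have "dheq T D (SOME h. h \<in> \<eta>2 x) (E x)" by (rule E2[OF x2 s])
  then show ?thesis using homs_some[OF h2] dheq_ends dheq_D Pk2[OF x2] by metis
qed

lemma basek:
  assumes c: "c \<in> subdi D X1 \<union> subdi D X2"
  shows "\<exists>(k::nat) \<delta>. k \<in> {1, 2} \<and> Pk (c 0) \<in> (if k = 1 then A1 else A2) \<and> Pk (c 1) \<in> (if k = 1 then A1 else A2)
     \<and> \<delta> \<in> subdi D (if k = 1 then X1 else X2) \<and> \<delta> 0 = Pk (c 0) \<and> \<delta> 1 = Pk (c 1)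
     \<and> dheq T D (dcat (E (c 0)) \<delta>) (dcat c (E (c 1)))
     \<and> c 0 \<in> X1 \<union> X2 \<and> c 1 \<in> X1 \<union> X2"
proof (cases "c \<in> subdi D X1")
  case True
  have cX: "c 0 \<in> X1" "c 1 \<in> X1" using True unfolding subdi_def by auto
  obtain \<delta> where "\<delta> \<in> subdi D X1 \<and> \<delta> 0 = P1o (c 0) \<and> \<delta> 1 = P1o (c 1) \<and> P1o (c 0) \<in> A1 \<and> P1o (c 1) \<in> A1
     \<and> dheq T D (dcat (E (c 0)) \<delta>) (dcat c (E (c 1)))"
    using base[where E=E, OF dsp X1sub P1 E1 True] by blast
  then show ?thesis using cX Pk1 by (intro exI[of _ 1] exI[of _ \<delta>]) auto
next
  case False
  then have c2: "c \<in> subdi D X2" using c by auto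
  have cX: "c 0 \<in> X2" "c 1 \<in> X2" using c2 unfolding subdi_def by auto
  obtain \<delta> where "\<delta> \<in> subdi D X2 \<and> \<delta> 0 = P2o (c 0) \<and> \<delta> 1 = P2o (c 1) \<and> P2o (c 0) \<in> A2 \<and> P2o (c 1) \<in> A2
     \<and> dheq T D (dcat (E (c 0)) \<delta>) (dcat c (E (c 1)))"
    using base[where E=E, OF dsp X2sub P2 E2 c2] by blast
  then show ?thesis using cX Pk2 by (intro exI[of _ 2] exI[of _ \<delta>]) auto
qed

lemma Aprop: assumes a: "a \<in> A1 \<union> A2" shows "Pk a = a \<and> dheq T D (\<lambda>_. a) (E a)"
proof (cases "a \<in> A1")
  case True
  then have x: "a \<in> X1" using A1sub by auto
  have ts: "topspace (subtopology T X1) = X1" using X1sub by auto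
  have "\<forall>a\<in>A1. \<eta>1 a = idm (subtopology T X1) (subdi D X1) a"
    using P1[unfolded future_retract_def] by (elim conjE)
  then have ia: "\<eta>1 a = dcls (subtopology T X1) (subdi D X1) (\<lambda>_. a)" using True by (simp add: idm_def)
  have cd: "(\<lambda>_. a) \<in> subdi D X1" using D_const[OF dsp] x X1sub unfolding subdi_def by auto
  have m: "(\<lambda>_. a) \<in> \<eta>1 a" using dcls_mem[OF cd] ia by simp
  have h1: "\<eta>1 a \<in> homs (subtopology T X1) (subdi D X1) a (P1o a)" by (rule eta_homs[OF P1 X1sub x])
  have "P1o a = a" using homs_mem[OF h1 m] by simp
  then show ?thesis using E1[OF x m] Pk1[OF x] by simp
next
  case False
  then have A: "a \<in> A2" using a by auto
  then have x: "a \<in> X2" using A2sub by auto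
  have "\<forall>a\<in>A2. \<eta>2 a = idm (subtopology T X2) (subdi D X2) a"
    using P2[unfolded future_retract_def] by (elim conjE)
  then have ia: "\<eta>2 a = dcls (subtopology T X2) (subdi D X2) (\<lambda>_. a)" using A by (simp add: idm_def)
  have cd: "(\<lambda>_. a) \<in> subdi D X2" using D_const[OF dsp] x X2sub unfolding subdi_def by auto
  have m: "(\<lambda>_. a) \<in> \<eta>2 a" using dcls_mem[OF cd] ia by simp
  have h2: "\<eta>2 a \<in> homs (subtopology T X2) (subdi D X2) a (P2o a)" by (rule eta_homs[OF P2 X2sub x])
  have "P2o a = a" using homs_mem[OF h2 m] by simp
  then show ?thesis using E2[OF x m] Pk2[OF x] by simp
qed

end


context vk begin

definition good :: "(real \<Rightarrow> 'a) \<Rightarrow> nat \<Rightarrow> (nat \<Rightarrow> 'a) \<Rightarrow> (nat \<Rightarrow> nat) \<Rightarrow> (nat \<Rightarrow> real \<Rightarrow> 'a) \<Rightarrow> bool" where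
 "good g m y k \<delta> \<longleftrightarrow> m \<ge> 1 \<and> y 0 = Pk (g 0) \<and> y m = Pk (g 1) \<and> (\<forall>i\<le>m. y i \<in> A1 \<union> A2)
   \<and> (\<forall>i\<in>{1..m}. k i \<in> {1, 2}
              \<and> y (i - 1) \<in> (if k i = 1 then A1 else A2)
              \<and> y i \<in> (if k i = 1 then A1 else A2)
              \<and> \<delta> i \<in> subdi D (if k i = 1 then X1 else X2)
              \<and> \<delta> i 0 = y (i - 1) \<and> \<delta> i 1 = y i)
   \<and> dcatl (map \<delta> [1..<m+1]) \<in> D \<and> dcatl (map \<delta> [1..<m+1]) 0 = Pk (g 0)
   \<and> dcatl (map \<delta> [1..<m+1]) 1 = Pk (g 1)
   \<and> g 0 \<in> X1 \<union> X2 \<and> g 1 \<in> X1 \<union> X2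
   \<and> dheq T D (dcat (E (g 0)) (dcatl (map \<delta> [1..<m+1]))) (dcat g (E (g 1)))"

lemma good_base:
  assumes c: "c \<in> subdi D X1 \<union> subdi D X2"
  shows "\<exists>m y k \<delta>. good c m y k \<delta>"
proof -
  obtain k0 :: nat and \<delta>0 where b: "k0 \<in> {1, 2}" "Pk (c 0) \<in> (if k0 = 1 then A1 else A2)"
    "Pk (c 1) \<in> (if k0 = 1 then A1 else A2)"
     "\<delta>0 \<in> subdi D (if k0 = 1 then X1 else X2)" "\<delta>0 0 = Pk (c 0)" "\<delta>0 1 = Pk (c 1)"
     "dheq T D (dcat (E (c 0)) \<delta>0) (dcat c (E (c 1)))"
     "c 0 \<in> X1 \<union> X2" "c 1 \<in> X1 \<union> X2"
    using basek[OF c] by blast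
  have d: "\<delta>0 \<in> D" using b(4) subdi_D by metis
  have A: "Pk (c 0) \<in> A1 \<union> A2" "Pk (c 1) \<in> A1 \<union> A2" using b(2,3) by (auto split: if_splits)
  have "good c 1 (\<lambda>i. if i = 0 then Pk (c 0) else Pk (c 1)) (\<lambda>_. k0) (\<lambda>_. \<delta>0)"
    unfolding good_def using b d A by (auto simp: le_Suc_eq)
  then show ?thesis by blast
qed

lemma good_step:
  assumes G: "good rest m y k \<delta>"
    and c: "c \<in> subdi D X1 \<union> subdi D X2" and j: "c 1 = rest 0"
    and split: "dheq T D (dcat c rest) g" and rD: "rest \<in> D" and g0: "g 0 = c 0" and g1: "g 1 = rest 1"
  shows "\<exists>m y k \<delta>. good g m y k \<delta>"
proof -
  obtain k0 :: nat and \<delta>0 where b: "k0 \<in> {1, 2}" "Pk (c 0) \<in> (if k0 = 1 then A1 else A2)"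
    "Pk (c 1) \<in> (if k0 = 1 then A1 else A2)"
     "\<delta>0 \<in> subdi D (if k0 = 1 then X1 else X2)" "\<delta>0 0 = Pk (c 0)" "\<delta>0 1 = Pk (c 1)"
     "dheq T D (dcat (E (c 0)) \<delta>0) (dcat c (E (c 1)))"
     "c 0 \<in> X1 \<union> X2" "c 1 \<in> X1 \<union> X2"
    using basek[OF c] by blast
  have d0: "\<delta>0 \<in> D" using b(4) subdi_D by metis
  have cD: "c \<in> D" using c subdi_D by blast
  let ?L = "dcatl (map \<delta> [1..<m+1])"
  have GG: "m \<ge> 1" "y 0 = Pk (rest 0)" "y m = Pk (rest 1)" "\<forall>i\<le>m. y i \<in> A1 \<union> A2"
    "\<forall>i\<in>{1..m}. k i \<in> {1, 2}
              \<and> y (i - 1) \<in> (if k i = 1 then A1 else A2)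
              \<and> y i \<in> (if k i = 1 then A1 else A2)
              \<and> \<delta> i \<in> subdi D (if k i = 1 then X1 else X2)
              \<and> \<delta> i 0 = y (i - 1) \<and> \<delta> i 1 = y i"
    "?L \<in> D" "?L 0 = Pk (rest 0)" "?L 1 = Pk (rest 1)" "rest 0 \<in> X1 \<union> X2" "rest 1 \<in> X1 \<union> X2"
    "dheq T D (dcat (E (rest 0)) ?L) (dcat rest (E (rest 1)))"
    using G unfolding good_def by blast+
  obtain x z w where xzw: "x = c 0" "z = c 1" "w = rest 1" by blast
  have Ex: "E x \<in> D" "E x 0 = x" "E x 1 = Pk x" using Efacts b(8) xzw by auto
  have Ez: "E z \<in> D" "E z 0 = z" "E z 1 = Pk z" using Efacts b(9) xzw by auto
  have Ew: "E w \<in> D" "E w 0 = w" "E w 1 = Pk w" using Efacts GG(10) xzw by auto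
  have s1: "dheq T D (dcat (E x) (dcat \<delta>0 ?L)) (dcat (dcat (E x) \<delta>0) ?L)"
    by (rule dheq_sym[OF dheq_assoc[OF dsp Ex(1) d0 GG(6)]]) (use Ex b GG j xzw in auto)
  have s2: "dheq T D (dcat (dcat (E x) \<delta>0) ?L) (dcat (dcat c (E z)) ?L)"
    by (rule dheq_dcat_left[OF dsp _ GG(6)]) (use b GG j xzw in \<open>auto simp: dcat_def\<close>)
  have s3: "dheq T D (dcat (dcat c (E z)) ?L) (dcat c (dcat (E z) ?L))"
    by (rule dheq_assoc[OF dsp cD Ez(1) GG(6)]) (use Ez GG j xzw in auto)
  have s4: "dheq T D (dcat c (dcat (E z) ?L)) (dcat c (dcat rest (E w)))"
    by (rule dheq_dcat_right[OF dsp _ cD]) (use GG j xzw Ez in \<open>auto simp: dcat_def\<close>)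
  have s5: "dheq T D (dcat c (dcat rest (E w))) (dcat (dcat c rest) (E w))"
    by (rule dheq_sym[OF dheq_assoc[OF dsp cD rD Ew(1)]]) (use Ew j xzw in auto)
  have s6: "dheq T D (dcat (dcat c rest) (E w)) (dcat g (E w))"
    by (rule dheq_dcat_left[OF dsp split Ew(1)]) (use Ew xzw in \<open>auto simp: dcat_def\<close>)
  have main: "dheq T D (dcat (E x) (dcat \<delta>0 ?L)) (dcat g (E w))"
    using dheq_trans[OF s1 dheq_trans[OF s2 dheq_trans[OF s3 dheq_trans[OF s4 dheq_trans[OF s5 s6]]]]] .
  define y' where "y' i = (if i = 0 then Pk x else y (i - 1))" for i
  define k' where "k' i = (if i = 1 then k0 else k (i - 1))" for i
  define \<delta>' where "\<delta>' i = (if i = 1 then \<delta>0 else \<delta> (i - 1))" for i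
  have mapeq: "map \<delta>' [1..<Suc m + 1] = \<delta>0 # map \<delta> [1..<m+1]"
  proof -
    have "[1..<Suc m + 1] = 1 # map Suc [1..<m+1]" by (simp add: upt_conv_Cons map_Suc_upt)
    moreover have "map \<delta>' (map Suc [1..<m+1]) = map \<delta> [1..<m+1]"
      by (auto simp: \<delta>'_def)
    ultimately show ?thesis by (simp add: \<delta>'_def)
  qed
  obtain a l where ne: "map \<delta> [1..<m+1] = a # l" using GG(1) by (cases "map \<delta> [1..<m+1]") auto
  have Leq: "dcatl (map \<delta>' [1..<Suc m + 1]) = dcat \<delta>0 ?L"
    by (simp only: mapeq ne dcatl.simps)
  have "good g (Suc m) y' k' \<delta>'"
    unfolding good_def
  proof (intro conjI)
    show "1 \<le> Suc m" by simp
    show "y' 0 = Pk (g 0)" using g0 xzw by (simp add: y'_def)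
    show "y' (Suc m) = Pk (g 1)" using GG(3) g1 by (simp add: y'_def)
    show "\<forall>i\<le>Suc m. y' i \<in> A1 \<union> A2"
      using GG(4) b(2) g0 xzw by (auto simp: y'_def split: if_splits)
    show "\<forall>i\<in>{1..Suc m}. k' i \<in> {1, 2}
              \<and> y' (i - 1) \<in> (if k' i = 1 then A1 else A2)
              \<and> y' i \<in> (if k' i = 1 then A1 else A2)
              \<and> \<delta>' i \<in> subdi D (if k' i = 1 then X1 else X2)
              \<and> \<delta>' i 0 = y' (i - 1) \<and> \<delta>' i 1 = y' i"
    proof
      fix i assume i: "i \<in> {1..Suc m}"
      show "k' i \<in> {1, 2}
              \<and> y' (i - 1) \<in> (if k' i = 1 then A1 else A2)
              \<and> y' i \<in> (if k' i = 1 then A1 else A2)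
              \<and> \<delta>' i \<in> subdi D (if k' i = 1 then X1 else X2)
              \<and> \<delta>' i 0 = y' (i - 1) \<and> \<delta>' i 1 = y' i"
      proof (cases "i = 1")
        case True
        then show ?thesis using b GG(2) j xzw by (simp add: y'_def k'_def \<delta>'_def)
      next
        case False
        then obtain i' where i': "i = Suc i'" "i' \<in> {1..m}" using i
          by (metis Suc_le_D Suc_le_mono atLeastAtMost_iff le_Suc_eq not_one_le_zero One_nat_def)
        then have "i' \<noteq> 0" by auto
        then show ?thesis using GG(5) i' by (simp add: y'_def k'_def \<delta>'_def)
      qed
    qed
    show "dcatl (map \<delta>' [1..<Suc m + 1]) \<in> D" unfolding Leq
      by (rule D_dcat[OF dsp d0 GG(6)]) (use b GG j xzw in simp)
    show "dcatl (map \<delta>' [1..<Suc m + 1]) 0 = Pk (g 0)" unfolding Leq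
      using b g0 by (simp add: dcat_def)
    show "dcatl (map \<delta>' [1..<Suc m + 1]) 1 = Pk (g 1)" unfolding Leq
      using GG g1 by (simp add: dcat_def)
    show "g 0 \<in> X1 \<union> X2" using b g0 by simp
    show "g 1 \<in> X1 \<union> X2" using GG g1 by simp
    show "dheq T D (dcat (E (g 0)) (dcatl (map \<delta>' [1..<Suc m + 1]))) (dcat g (E (g 1)))"
      unfolding Leq using main g0 g1 xzw by simp
  qed
  then show ?thesis by blast
qed

end


context vk begin

lemma main:
  "1 \<le> n \<Longrightarrow> g \<in> D \<Longrightarrow> t 0 = 0 \<Longrightarrow> t n = 1 \<Longrightarrow> \<forall>i<n. t i < t (Suc i) \<Longrightarrow>
   \<forall>i<n. (\<lambda>s. g (t i + s * (t (Suc i) - t i))) \<in> subdi D X1 \<union> subdi D X2 \<Longrightarrow>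
   \<exists>m y k \<delta>. good g m y k \<delta>"
proof (induction n arbitrary: g t)
  case 0
  then show ?case by simp
next
  case (Suc n)
  show ?case
  proof (cases "n = 0")
    case True
    have "(\<lambda>s. g (t 0 + s * (t (Suc 0) - t 0))) = g" using Suc.prems True by simp
    then have "g \<in> subdi D X1 \<union> subdi D X2" using Suc.prems(6) True by force
    then show ?thesis by (rule good_base)
  next
    case False
    define t1 where "t1 = t 1"
    have t1: "0 < t1" "t1 < 1"
      using strict_lt[OF Suc.prems(5), of 0 1] strict_lt[OF Suc.prems(5), of 1 "Suc n"] False Suc.prems(3,4)
      by (auto simp: t1_def)
    define c where "c = (\<lambda>s. g (t 0 + s * (t (Suc 0) - t 0)))"
    have cU: "c \<in> subdi D X1 \<union> subdi D X2" using Suc.prems(6) unfolding c_def by auto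
    have c': "c = (\<lambda>s. g (s * t1))" using Suc.prems(3) by (simp add: c_def t1_def)
    define rest where "rest = (\<lambda>s. g (t1 + (1 - t1) * s))"
    have rD: "rest \<in> D" unfolding rest_def
      using D_comp[OF dsp Suc.prems(2) reparam_sub[OF reparam_id, of t1 1]] t1 by simp
    define t' where "t' i = (t (Suc i) - t1) / (1 - t1)" for i
    have ne: "1 - t1 \<noteq> 0" using t1 by simp
    have IH: "\<exists>m y k \<delta>. good rest m y k \<delta>"
    proof (rule Suc.IH)
      show "1 \<le> n" using False by simp
      show "rest \<in> D" by (rule rD)
      show "t' 0 = 0" by (simp add: t'_def t1_def)
      show "t' n = 1" using Suc.prems(4) ne by (simp add: t'_def)
      show "\<forall>i<n. t' i < t' (Suc i)"
      proof (intro allI impI)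
        fix i assume "i < n"
        then have "t (Suc i) - t1 < t (Suc (Suc i)) - t1" using Suc.prems(5) by auto
        then show "t' i < t' (Suc i)" unfolding t'_def using t1 by (simp add: divide_strict_right_mono)
      qed
      show "\<forall>i<n. (\<lambda>s. rest (t' i + s * (t' (Suc i) - t' i))) \<in> subdi D X1 \<union> subdi D X2"
      proof (intro allI impI)
        fix i assume i: "i < n"
        have "(\<lambda>s. rest (t' i + s * (t' (Suc i) - t' i))) = (\<lambda>s. g (t (Suc i) + s * (t (Suc (Suc i)) - t (Suc i))))"
        proof (rule ext)
          fix s
          have "t1 + (1 - t1) * (t' i + s * (t' (Suc i) - t' i)) = t (Suc i) + s * (t (Suc (Suc i)) - t (Suc i))"
          proof -
            have e1: "t' (Suc i) - t' i = (t (Suc (Suc i)) - t (Suc i)) / (1 - t1)"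
              unfolding t'_def by (simp add: diff_divide_distrib)
            have gen: "u * (A / u + s * (B / u)) = A + s * B" if "u \<noteq> 0" for u A B :: real
              using that by (simp add: field_simps)
            have "(1 - t1) * (t' i + s * (t' (Suc i) - t' i)) = (t (Suc i) - t1) + s * (t (Suc (Suc i)) - t (Suc i))"
              unfolding e1 unfolding t'_def by (rule gen[OF ne])
            then show ?thesis by simp
          qed
          then show "rest (t' i + s * (t' (Suc i) - t' i)) = g (t (Suc i) + s * (t (Suc (Suc i)) - t (Suc i)))"
            unfolding rest_def by simp
        qed
        then show "(\<lambda>s. rest (t' i + s * (t' (Suc i) - t' i))) \<in> subdi D X1 \<union> subdi D X2"
          using Suc.prems(6) i by auto
      qed
    qed
    then obtain m y k \<delta> where G: "good rest m y k \<delta>" by blast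
    show ?thesis
    proof (rule good_step[OF G cU])
      show "c 1 = rest 0" by (simp add: c' rest_def)
      show "dheq T D (dcat c rest) g" unfolding c' rest_def by (rule dheq_split[OF dsp Suc.prems(2) t1])
      show "rest \<in> D" by (rule rD)
      show "g 0 = c 0" by (simp add: c' )
      show "g 1 = rest 1" by (simp add: rest_def)
    qed
  qed
qed

end

theorem lemma4p1:
  fixes T :: "'a topology" and D :: "(real \<Rightarrow> 'a) set"
    and X1 X2 A1 A2 :: "'a set"
    and P0o P1o P2o :: "'a \<Rightarrow> 'a"
    and P0m P1m P2m :: "(real \<Rightarrow> 'a) set \<Rightarrow> (real \<Rightarrow> 'a) set"
    and \<eta>0 \<eta>1 \<eta>2 :: "'a \<Rightarrow> (real \<Rightarrow> 'a) set"
    and a a' :: 'a and \<gamma> :: "real \<Rightarrow> 'a"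
  assumes dsp: "dspace T D"
    and X1sub: "X1 \<subseteq> topspace T" and X2sub: "X2 \<subseteq> topspace T"
    and cover: "topspace T = (T interior_of X1) \<union> (T interior_of X2)"
    and gen: "D = fin_concats (subdi D X1 \<union> subdi D X2)"
    and A1sub: "A1 \<subseteq> X1" and A2sub: "A2 \<subseteq> X2"
    and Acover: "A1 \<union> A2 = (subtopology T (A1 \<union> A2) interior_of A1)
                           \<union> (subtopology T (A1 \<union> A2) interior_of A2)"
    and P0: "future_retract (subtopology T (X1 \<inter> X2)) (subdi D (X1 \<inter> X2)) (A1 \<inter> A2) P0o P0m \<eta>0"
    and P1: "future_retract (subtopology T X1) (subdi D X1) A1 P1o P1m \<eta>1"
    and P2: "future_retract (subtopology T X2) (subdi D X2) A2 P2o P2m \<eta>2"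
    and obj1: "\<forall>x\<in>X1 \<inter> X2. P1o x = P0o x"
    and obj2: "\<forall>x\<in>X1 \<inter> X2. P2o x = P0o x"
    and mor1: "\<forall>x\<in>X1 \<inter> X2. \<forall>y\<in>X1 \<inter> X2.
                 \<forall>f\<in>homs (subtopology T (X1 \<inter> X2)) (subdi D (X1 \<inter> X2)) x y.
                   P1m (incl (subtopology T X1) (subdi D X1) f)
                   = incl (subtopology T X1) (subdi D X1) (P0m f)"
    and mor2: "\<forall>x\<in>X1 \<inter> X2. \<forall>y\<in>X1 \<inter> X2.
                 \<forall>f\<in>homs (subtopology T (X1 \<inter> X2)) (subdi D (X1 \<inter> X2)) x y.
                   P2m (incl (subtopology T X2) (subdi D X2) f)
                   = incl (subtopology T X2) (subdi D X2) (P0m f)"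
    and unit1: "\<forall>x\<in>X1 \<inter> X2. incl (subtopology T X1) (subdi D X1) (\<eta>0 x) = \<eta>1 x"
    and unit2: "\<forall>x\<in>X1 \<inter> X2. incl (subtopology T X2) (subdi D X2) (\<eta>0 x) = \<eta>2 x"
    and aA: "a \<in> A1 \<union> A2" and a'A: "a' \<in> A1 \<union> A2"
    and \<gamma>D: "\<gamma> \<in> D" and \<gamma>0: "\<gamma> 0 = a" and \<gamma>1: "\<gamma> 1 = a'"
  shows "\<exists>n::nat. \<exists>y::nat \<Rightarrow> 'a. \<exists>k::nat \<Rightarrow> nat. \<exists>\<delta>::nat \<Rightarrow> real \<Rightarrow> 'a.
           n \<ge> 1 \<and> y 0 = a \<and> y n = a' \<and> (\<forall>i\<le>n. y i \<in> A1 \<union> A2)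
         \<and> (\<forall>i\<in>{1..n}. k i \<in> {1, 2}
              \<and> y (i - 1) \<in> (if k i = 1 then A1 else A2)
              \<and> y i \<in> (if k i = 1 then A1 else A2)
              \<and> \<delta> i \<in> subdi D (if k i = 1 then X1 else X2)
              \<and> \<delta> i 0 = y (i - 1) \<and> \<delta> i 1 = y i)
         \<and> dheq T D \<gamma> (dcatl (map \<delta> [1..<n+1]))"
proof -
  interpret V: vk T D X1 X2 A1 A2 P0o P1o P2o P0m P1m P2m \<eta>0 \<eta>1 \<eta>2
    by (rule vk.intro[OF dsp X1sub X2sub A1sub A2sub P0 P1 P2 obj1 obj2 unit1 unit2])
  have "\<gamma> \<in> fin_concats (subdi D X1 \<union> subdi D X2)" using \<gamma>D gen by simp
  then obtain n :: nat and t where nt: "n \<ge> 1" "t 0 = 0" "t n = 1" "\<forall>i<n. t i < t (Suc i)"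
    "\<forall>i<n. (\<lambda>s. \<gamma> (t i + s * (t (Suc i) - t i))) \<in> subdi D X1 \<union> subdi D X2"
    unfolding fin_concats_def by blast
  obtain m y k \<delta> where G: "V.good \<gamma> m y k \<delta>" using V.main[OF nt(1) \<gamma>D nt(2-5)] by blast
  have Aa: "V.Pk a = a" "dheq T D (\<lambda>_. a) (V.E a)" using V.Aprop[OF aA] by auto
  have Aa': "V.Pk a' = a'" "dheq T D (\<lambda>_. a') (V.E a')" using V.Aprop[OF a'A] by auto
  let ?L = "dcatl (map \<delta> [1..<m+1])"
  have GG: "m \<ge> 1" "y 0 = a" "y m = a'" "\<forall>i\<le>m. y i \<in> A1 \<union> A2"
    "\<forall>i\<in>{1..m}. k i \<in> {1, 2}
              \<and> y (i - 1) \<in> (if k i = 1 then A1 else A2)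
              \<and> y i \<in> (if k i = 1 then A1 else A2)
              \<and> \<delta> i \<in> subdi D (if k i = 1 then X1 else X2)
              \<and> \<delta> i 0 = y (i - 1) \<and> \<delta> i 1 = y i"
    "?L \<in> D" "?L 0 = a" "?L 1 = a'"
    "dheq T D (dcat (V.E a) ?L) (dcat \<gamma> (V.E a'))"
    using G Aa Aa' \<gamma>0 \<gamma>1 unfolding V.good_def by auto
  have Ea': "V.E a' 0 = a'" using dheq_ends[OF Aa'(2)] by simp
  have s1: "dheq T D ?L (dcat (\<lambda>_. a) ?L)"
    using dheq_sym[OF dheq_lunit[OF dsp GG(6)]] GG(7) by simp
  have s2: "dheq T D (dcat (\<lambda>_. a) ?L) (dcat (V.E a) ?L)"
    by (rule dheq_dcat_left[OF dsp Aa(2) GG(6)]) (use GG in simp)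
  have s4: "dheq T D (dcat \<gamma> (V.E a')) (dcat \<gamma> (\<lambda>_. a'))"
    by (rule dheq_dcat_right[OF dsp dheq_sym[OF Aa'(2)] \<gamma>D]) (use \<gamma>1 Ea' in simp)
  have s5: "dheq T D (dcat \<gamma> (\<lambda>_. a')) \<gamma>"
    using dheq_runit[OF dsp \<gamma>D] \<gamma>1 by simp
  have "dheq T D ?L \<gamma>"
    using dheq_trans[OF s1 dheq_trans[OF s2 dheq_trans[OF GG(9) dheq_trans[OF s4 s5]]]] .
  then have "dheq T D \<gamma> ?L" by (rule dheq_sym)
  then show ?thesis using GG(1-5) by blast
qed


end
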